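(* For $m,n\in\mathbb{N}$, let $$G_{m,n}=\sum_{k=0}^{n-1}\frac{1}{(2k+1)(2k+2)\cdots(2k+m)}.$$ Then $$G_{m,n}=\sum_{k=1}^n\frac{(-1)^{k-1}}{(m-1)!\,(m+k-1)}\binom{n}{k}\,{}_2F_1(1,1-k;m+k;-1).$$
   Context: $\mathbb{N}$ is the set of positive integers. For complex $a_1,\ldots,a_{s+1},b_1,\ldots,b_s$ with no $b_i$ zero or a negative integer, the generalized hypergeometric function is ${}_{s+1}F_s(a_1,\ldots,a_{s+1};b_1,\ldots,b_s;x)=\sum_{i\geq 0}\frac{(a_1)_i\cdots(a_{s+1})_i}{(b_1)_i\cdots(b_s)_i}\frac{x^i}{i!}$, where $(a)_0=1$ and $(a)_i=a(a+1)\cdots(a+i-1)$ for $i>0$. (When some $a_j$ is a nonpositive integer the series is a finite sum.) *)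

theory Defs
  imports Complex_Main
begin

definition hyp2F1 :: "real \<Rightarrow> real \<Rightarrow> real \<Rightarrow> real \<Rightarrow> real" where
  "hyp2F1 a b c x = (\<Sum>i. pochhammer a i * pochhammer b i / (pochhammer c i * fact i) * x ^ i)"

definition G :: "nat \<Rightarrow> nat \<Rightarrow> real" where
  "G m n = (\<Sum>k<n. 1 / (\<Prod>j=1..m. real (2*k + j)))"

end

theory Submission
  imports Defs "HOL-Computational_Algebra.Polynomial"
begin

definition pint :: "real poly \<Rightarrow> real" where
  "pint p = (\<Sum>i\<le>degree p. coeff p i / (real i + 1))"

lemma pint_bound: "degree p \<le> N \<Longrightarrow> pint p = (\<Sum>i\<le>N. coeff p i / (real i + 1))"
  unfolding pint_def
  by (rule sum.mono_neutral_left) (auto simp: coeff_eq_0)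

lemma pint_add: "pint (p + q) = pint p + pint q"
proof -
  let ?N = "max (degree p) (degree q)"
  have "degree (p + q) \<le> ?N" by (rule degree_add_le) auto
  then show ?thesis
    by (simp add: pint_bound[of _ ?N] sum.distrib add_divide_distrib)
qed

lemma pint_smult: "pint (smult c p) = c * pint p"
proof -
  have "degree (smult c p) \<le> degree p" by (rule degree_smult_le)
  then show ?thesis by (simp add: pint_bound[of _ "degree p"] pint_def sum_distrib_left)
qed

lemma pint_minus: "pint (- p) = - pint p"
  using pint_smult[of "-1" p] by simp

lemma pint_diff: "pint (p - q) = pint p - pint q"
  using pint_add[of p "-q"] pint_minus[of q] by simp

lemma pint_sum: "pint (\<Sum>k\<in>A. f k) = (\<Sum>k\<in>A. pint (f k))"
proof (induction A rule: infinite_finite_induct)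
  case (insert x F) then show ?case by (simp add: pint_add)
qed (auto simp: pint_def)

lemma pint_pderiv: "pint (pderiv r) = poly r 1 - poly r 0"
proof -
  have d: "degree (pderiv r) \<le> degree r" by (simp add: degree_pderiv)
  have "pint (pderiv r) = (\<Sum>i\<le>degree r. coeff r (Suc i))"
    by (simp add: pint_bound[OF d] coeff_pderiv add.commute)
  also have "\<dots> = (\<Sum>i\<le>Suc (degree r). coeff r i) - coeff r 0"
    using sum.atMost_Suc_shift[of "coeff r" "degree r"] by simp
  also have "(\<Sum>i\<le>Suc (degree r). coeff r i) = (\<Sum>i\<le>degree r. coeff r i)"
    by (simp add: coeff_eq_0)
  finally show ?thesis by (simp add: poly_altdef poly_0_coeff_0)
qed

lemma pint_parts: "pint (pderiv p * q) = poly (p*q) 1 - poly (p*q) 0 - pint (p * pderiv q)"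
  using pint_pderiv[of "p*q"] by (simp add: pderiv_mult pint_add algebra_simps)


lemma pint_monom: "pint (monom c a) = c / (real a + 1)"
proof -
  have "pint (monom c a) = (\<Sum>i\<le>a. coeff (monom c a) i / (real i + 1))"
    by (rule pint_bound) (simp add: degree_monom_le)
  also have "\<dots> = (\<Sum>i\<le>a. if i = a then c / (real a + 1) else 0)"
    by (rule sum.cong) (auto simp: coeff_monom)
  also have "\<dots> = c / (real a + 1)" by simp
  finally show ?thesis .
qed

lemma pint_beta: "pint (monom 1 a * [:1,-1:]^b) = fact a * fact b / fact (a+b+1)"
proof (induction b arbitrary: a)
  case 0
  have "fact a / fact (Suc a) = 1 / (real a + (1::real))"
    by (simp add: fact_Suc divide_simps)
  then show ?case by (simp add: pint_monom)
next
  case (Suc b)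
  define p where "p = smult (1/(real a+1)) (monom 1 (Suc a))"
  define q where "q = ([:1,-1:]::real poly)^Suc b"
  have dp: "pderiv p = monom 1 a" unfolding p_def
  proof -
    have "real (Suc a) * (1 / (real a + 1) * 1) = 1" by simp
    then show "pderiv (smult (1 / (real a + 1)) (monom 1 (Suc a))) = monom 1 a"
      by (simp only: pderiv_smult pderiv_monom smult_monom diff_Suc_1)
  qed
  have dq: "pderiv q = smult (-(real (Suc b))) ([:1,-1:]^b)" unfolding q_def
    by (simp add: pderiv_power_Suc pderiv_pCons del: power_Suc)
  have "pint (monom 1 a * [:1,-1:]^Suc b) = pint (pderiv p * q)" by (simp add: dp q_def)
  also have "\<dots> = - pint (p * pderiv q)"
    by (simp add: pint_parts p_def q_def poly_monom)
  also have "p * pderiv q = smult (- (real (Suc b)) / (real a + 1)) (monom 1 (Suc a) * [:1,-1:]^b)"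
    by (simp add: p_def dq)
  also have "- pint \<dots> = (real (Suc b)) / (real a + 1) * (fact (Suc a) * fact b / fact (Suc a + b + 1))"
    by (simp only: pint_smult Suc.IH)
  also have "\<dots> = fact a * fact (Suc b) / fact (a + Suc b + 1)"
  proof -
    have e: "Suc a + b + 1 = a + Suc b + 1" by simp
    have g: "(real b + 1) / (real a + 1) * ((real a + 1) * x * y / F) = x * ((real b + 1) * y) / F" for x y F :: real
    proof -
      have h: "real a + 1 \<noteq> 0" by simp
      have "(real b + 1) / (real a + 1) * ((real a + 1) * x * y / F) = ((real b + 1) / (real a + 1) * (real a + 1)) * (x * y / F)"
        by simp
      also have "(real b + 1) / (real a + 1) * (real a + 1) = real b + 1" using h by simp
      finally show ?thesis by simp
    qed
    show ?thesis unfolding e using g[of "fact a" "fact b" "fact (a + Suc b + 1)"]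
      by (simp only: fact_Suc of_nat_Suc add.commute[of 1])
  qed
  finally show ?case .
qed

lemma pint_K: "pint ([:1,-1:]^a * [:1,1:]^k) =
   1 / (real a + 1) * (\<Sum>i\<le>k. (-1)^i * pochhammer (- real k) i / pochhammer (real a + 2) i)"
proof (induction k arbitrary: a)
  case 0
  have "fact 0 * fact a / fact (0 + a + 1) = 1 / (real a + (1::real))"
    by (simp add: fact_Suc divide_simps)
  then show ?case using pint_beta[of 0 a] by simp
next
  case (Suc k)
  define p where "p = smult (-1/(real a+1)) ([:1,-1:]^Suc a)"
  define q where "q = ([:1,1:]::real poly)^Suc k"
  have dp: "pderiv p = [:1,-1:]^a"
  proof -
    have "pderiv p = smult (-1/(real a+1) * real (Suc a)) ([:1,-1:]^a * [:-1:])"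
      unfolding p_def by (simp only: pderiv_smult pderiv_power_Suc pderiv_pCons mult_smult_left smult_smult) simp
    also have "-1/(real a+1) * real (Suc a) = -1" by simp
    finally show ?thesis by simp
  qed
  have dq: "pderiv q = smult (real (Suc k)) ([:1,1:]^k)" unfolding q_def
    by (simp add: pderiv_power_Suc pderiv_pCons del: power_Suc)
  have "pint ([:1,-1:]^a * [:1,1:]^Suc k) = pint (pderiv p * q)" by (simp add: dp q_def)
  also have "\<dots> = 1 / (real a + 1) - pint (p * pderiv q)"
    by (simp add: pint_parts p_def q_def)
  also have "p * pderiv q = smult (-1/(real a+1) * real (Suc k)) ([:1,-1:]^Suc a * [:1,1:]^k)"
    by (simp only: p_def dq mult_smult_left mult_smult_right smult_smult) (simp add: mult_ac)
  also have "1 / (real a + 1) - pint \<dots> = 1 / (real a + 1) + real (Suc k) / (real a + 1) *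
     (1 / (real (Suc a) + 1) * (\<Sum>i\<le>k. (-1)^i * pochhammer (- real k) i / pochhammer (real (Suc a) + 2) i))"
    unfolding pint_smult Suc.IH by simp
  also have "\<dots> = 1 / (real a + 1) * (\<Sum>i\<le>Suc k. (-1)^i * pochhammer (- real (Suc k)) i / pochhammer (real a + 2) i)"
  proof -
    have e1: "pochhammer (- real (Suc k)) (Suc i) = - real (Suc k) * pochhammer (- real k) i" for i
      by (simp add: pochhammer_rec)
    have e2: "pochhammer (real a + 2) (Suc i) = (real a + 2) * pochhammer (real (Suc a) + 2) i" for i
      by (simp add: pochhammer_rec add_ac)
    have "(\<Sum>i\<le>Suc k. (-1)^i * pochhammer (- real (Suc k)) i / pochhammer (real a + 2) i)
       = 1 + (\<Sum>i\<le>k. (-1)^(Suc i) * pochhammer (- real (Suc k)) (Suc i) / pochhammer (real a + 2) (Suc i))"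
      by (subst sum.atMost_Suc_shift) simp
    also have "\<dots> = 1 + real (Suc k) / (real a + 2) * (\<Sum>i\<le>k. (-1)^i * pochhammer (- real k) i / pochhammer (real (Suc a) + 2) i)"
    proof -
      have "(\<Sum>i\<le>k. (-1)^(Suc i) * pochhammer (- real (Suc k)) (Suc i) / pochhammer (real a + 2) (Suc i))
         = (\<Sum>i\<le>k. real (Suc k) / (real a + 2) * ((-1)^i * pochhammer (- real k) i / pochhammer (real (Suc a) + 2) i))"
      proof (rule sum.cong[OF refl])
        fix i
        have "real a + 2 \<noteq> 0" by simp
        then show "(-1)^(Suc i) * pochhammer (- real (Suc k)) (Suc i) / pochhammer (real a + 2) (Suc i)
          = real (Suc k) / (real a + 2) * ((-1)^i * pochhammer (- real k) i / pochhammer (real (Suc a) + 2) i)"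
          unfolding e1 e2 by (simp add: field_simps)
      qed
      then show ?thesis by (simp add: sum_distrib_left)
    qed
    finally have Ss: "(\<Sum>i\<le>Suc k. (-1)^i * pochhammer (- real (Suc k)) i / pochhammer (real a + 2) i) = 1 + real (Suc k) / (real a + 2) * (\<Sum>i\<le>k. (-1)^i * pochhammer (- real k) i / pochhammer (real (Suc a) + 2) i)" .
    have r: "real (Suc a) + 1 = real a + 2" by simp
    have g: "1 / A + y / A * (1 / B * S) = 1 / A * (1 + y / B * S)" for A B y S :: real
      by (simp add: ring_distribs)
    show ?thesis unfolding Ss r by (rule g)
  qed
  finally show ?case .
qed


lemma prod_fact: "(\<Prod>j=1..m. real (c + j)) = fact (c + m) / fact c"
proof (induction m)
  case 0 then show ?case by simp
next
  case (Suc m)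
  have "(\<Prod>j=1..Suc m. real (c + j)) = (\<Prod>j=1..m. real (c + j)) * real (c + Suc m)"
    by (simp add: prod.nat_ivl_Suc')
  also have "\<dots> = fact (c + Suc m) / fact c" using Suc by (simp add: fact_Suc)
  finally show ?case .
qed

lemma binom_id:
  fixes y :: "'a::comm_ring_1"
  shows "y * (\<Sum>k<n. (-1)^k * of_nat (n choose Suc k) * y^k) = 1 - (1 - y)^n"
proof -
  have "(1 - y)^n = (-y + 1)^n" by simp
  also have "\<dots> = (\<Sum>k\<le>n. of_nat (n choose k) * (-y)^k * 1^(n-k))" by (rule binomial_ring)
  also have "\<dots> = 1 + (\<Sum>k<n. of_nat (n choose Suc k) * (-y)^Suc k)"
    by (subst sum.atMost_shift) simp
  also have "(\<Sum>k<n. of_nat (n choose Suc k) * (-y)^Suc k) = - (y * (\<Sum>k<n. (-1)^k * of_nat (n choose Suc k) * y^k))"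
  proof -
    have "of_nat (n choose Suc k) * (-y)^Suc k = - (y * ((-1)^k * of_nat (n choose Suc k) * y^k))" for k
      by (simp only: power_Suc power_minus[of y k]) (simp add: mult_ac)
    then show ?thesis by (simp add: sum_distrib_left sum_negf del: power_Suc)
  qed
  finally show ?thesis by simp
qed

lemma poly_id:
  "(\<Sum>k<n. ([:0,0,1:]::real poly)^k) = (\<Sum>k<n. (-1)^k * of_nat (n choose Suc k) * [:1,0,-1:]^k)"
proof -
  let ?z = "[:0,0,1:]::real poly"
  have y: "[:1,0,-1:] = 1 - ?z" by (simp add: one_pCons)
  have "(1 - ?z) * (\<Sum>k<n. ?z^k) = (1 - ?z) * (\<Sum>k<n. (-1)^k * of_nat (n choose Suc k) * [:1,0,-1:]^k)"
    unfolding y binom_id one_diff_power_eq[symmetric] by (simp only: diff_diff_eq2 add_diff_cancel_left')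
  moreover have "1 - ?z \<noteq> 0" unfolding y[symmetric] by simp
  ultimately show ?thesis by (rule mult_left_cancel[THEN iffD1, rotated])
qed

lemma hyp_eval: "hyp2F1 1 (1 - real (Suc k)) (real (m + Suc k)) (-1) =
  (\<Sum>i\<le>k. (-1)^i * pochhammer (- real k) i / pochhammer (real (m + k) + 1) i)"
proof -
  have "hyp2F1 1 (1 - real (Suc k)) (real (m + Suc k)) (-1) =
    (\<Sum>i. (-1)^i * pochhammer (- real k) i / pochhammer (real (m + k) + 1) i)"
    unfolding hyp2F1_def
    by (rule arg_cong[where f=suminf], rule ext) (simp add: pochhammer_fact[symmetric] add_ac)
  also have "\<dots> = (\<Sum>i\<le>k. (-1)^i * pochhammer (- real k) i / pochhammer (real (m + k) + 1) i)"
    by (rule suminf_finite) (auto simp: pochhammer_of_nat_eq_0_iff)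
  finally show ?thesis .
qed


lemma monom_z: "monom 1 (2*k) = ([:0,0,1:]::real poly)^k"
proof -
  have "([:0,0,1:]::real poly) = monom 1 2" by (simp add: monom_altdef numeral_2_eq_2)
  then show ?thesis by (simp add: monom_power mult.commute)
qed

lemma const_mult: "((-1)^k * of_nat c) * p = smult ((-1)^k * real c) (p::real poly)"
proof -
  have "(-1::real poly)^k = [:(-1)^k:]"
    by (induction k) (simp_all add: one_pCons)
  then show ?thesis by (simp add: of_nat_poly mult.commute)
qed

theorem proposition3p5:
  fixes m n :: nat
  assumes "m \<ge> 1" and "n \<ge> 1"
  shows "G m n = (\<Sum>k=1..n. (-1) ^ (k - 1) / (fact (m - 1) * real (m + k - 1))
                   * real (n choose k) * hyp2F1 1 (1 - real k) (real (m + k)) (-1))"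
proof -
  obtain m' where m: "m = Suc m'" using assms(1) by (cases m) auto
  define F :: real where "F = fact m'"
  have F0: "F \<noteq> 0" unfolding F_def by simp
  define w :: "real poly" where "w = [:1,-1:]^m'"
  have L: "F * G m n = pint ((\<Sum>k<n. [:0,0,1:]^k) * w)"
  proof -
    have "F * (1 / (\<Prod>j=1..m. real (2*k + j))) = pint ([:0,0,1:]^k * w)" for k
    proof -
      have "F * (1 / (\<Prod>j=1..m. real (2*k + j))) = fact (2*k) * fact m' / fact (2*k + m' + 1)"
        unfolding prod_fact F_def m by simp
      also have "\<dots> = pint ([:0,0,1:]^k * w)"
        unfolding w_def monom_z[symmetric] pint_beta ..
      finally show ?thesis .
    qed
    then have "F * G m n = (\<Sum>k<n. pint ([:0,0,1:]^k * w))"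
      unfolding G_def sum_distrib_left by simp
    also have "\<dots> = pint ((\<Sum>k<n. [:0,0,1:]^k) * w)"
      by (simp add: pint_sum sum_distrib_right)
    finally show ?thesis .
  qed
  have R: "F * (\<Sum>k=1..n. (-1) ^ (k - 1) / (fact (m - 1) * real (m + k - 1))
                   * real (n choose k) * hyp2F1 1 (1 - real k) (real (m + k)) (-1))
     = pint ((\<Sum>k<n. (-1)^k * of_nat (n choose Suc k) * [:1,0,-1:]^k) * w)"
  proof -
    have "F * ((-1) ^ (Suc k - 1) / (fact (m - 1) * real (m + Suc k - 1))
                   * real (n choose Suc k) * hyp2F1 1 (1 - real (Suc k)) (real (m + Suc k)) (-1))
        = pint (((-1)^k * of_nat (n choose Suc k) * [:1,0,-1:]^k) * w)" (is "?f (Suc k) = ?p k") for k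
    proof -
      have pk: "pint ([:1,-1:]^(m'+k) * [:1,1:]^k) =
         1 / (real (m + k)) * hyp2F1 1 (1 - real (Suc k)) (real (m + Suc k)) (-1)"
        unfolding pint_K hyp_eval m by (simp add: add_ac)
      have e: "[:1,-1:]^(m'+k) * [:1,1:]^k = w * [:1,0,-1:]^k"
        unfolding w_def by (simp add: power_add power_mult_distrib[symmetric] mult_ac)
      have "pint (((-1)^k * of_nat (n choose Suc k) * [:1,0,-1:]^k) * w)
         = (-1)^k * real (n choose Suc k) * pint ([:1,-1:]^(m'+k) * [:1,1:]^k)"
        unfolding e const_mult mult_smult_left pint_smult by (simp add: mult_ac)
      also have "\<dots> = F * ((-1) ^ (Suc k - 1) / (fact (m - 1) * real (m + Suc k - 1))
                   * real (n choose Suc k) * hyp2F1 1 (1 - real (Suc k)) (real (m + Suc k)) (-1))"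
      proof -
        have f1: "fact (m - 1) = F" unfolding F_def m by simp
        have f2: "m + Suc k - 1 = m + k" by simp
        have mk: "real (m + k) \<noteq> 0" using m by simp
        have g: "\<And>(s::real) C h r F. F \<noteq> 0 \<Longrightarrow> r \<noteq> 0 \<Longrightarrow> s*C*(1/r*h) = F*(s/(F*r)*C*h)"
          by (simp add: field_simps)
        show ?thesis unfolding pk f1 f2 diff_Suc_1 by (rule g[OF F0 mk])
      qed
      finally show ?thesis by simp
    qed
    note tk = this
    have "F * (\<Sum>k=1..n. (-1) ^ (k - 1) / (fact (m - 1) * real (m + k - 1))
                   * real (n choose k) * hyp2F1 1 (1 - real k) (real (m + k)) (-1)) = (\<Sum>k=Suc 0..n. ?f k)"
      by (simp add: sum_distrib_left)
    also have "\<dots> = (\<Sum>k<n. ?f (Suc k))" by (rule sum.atLeast1_atMost_eq)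
    also have "\<dots> = (\<Sum>k<n. ?p k)" using tk by (rule sum.cong[OF refl])
    also have "\<dots> = pint ((\<Sum>k<n. (-1)^k * of_nat (n choose Suc k) * [:1,0,-1:]^k) * w)"
      by (simp only: pint_sum sum_distrib_right)
    finally show ?thesis .
  qed
  have "F * G m n = F * (\<Sum>k=1..n. (-1) ^ (k - 1) / (fact (m - 1) * real (m + k - 1))
                   * real (n choose k) * hyp2F1 1 (1 - real k) (real (m + k)) (-1))"
    unfolding L R poly_id ..
  then show ?thesis using F0 by simp
qed

end
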